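(* Let $k\ge1$. Then for all graphs $G,G'$, all $\vec v\in V(G)^{k+1}$, $\vec v'\in V(G')^{k+1}$, and all $t\in\mathbb{N}$, the following are equivalent: (i) $\mathrm{OWL}^{k+1,t}(G,\vec v)=\mathrm{OWL}^{k+1,t}(G',\vec v')$; (ii) $\mathrm{atp}_{k+1}(G,\vec v)=\mathrm{atp}_{k+1}(G',\vec v')$ and $\mathrm{WL}^{k,t}(G,\vec v[/i])=\mathrm{WL}^{k,t}(G',\vec v'[/i])$ for all $i\in[k+1]$.
   Context: Graphs are finite, undirected, simple, with a fixed number $\ell$ of vertex labels $P_1(G),\dots,P_\ell(G)\subseteq V(G)$. Colours are formal objects (nested tuples/multisets) comparable across graphs. For $\vec v=(v_1,\dots,v_m)\in V(G)^m$: $\mathrm{atp}_m(G,\vec v)$ is the 0/1-vector recording, for $1\le i<j\le m$, whether $v_i=v_j$ and whether $v_iv_j\in E(G)$, and for $i\in[m],j\in[\ell]$ whether $v_i\in P_j(G)$. $\vec vw=(v_1,\dots,v_m,w)$; $\vec v[w/i]=(v_1,\dots,v_{i-1},w,v_{i+1},\dots,v_m)$; $\vec v[/i]=(v_1,\dots,v_{i-1},v_{i+1},\dots,v_m)$. $k$-WL: $\mathrm{WL}^{k,0}=\mathrm{atp}_k$, $\mathrm{WL}^{k,t+1}(G,\vec v)=\big(\mathrm{WL}^{k,t}(G,\vec v),\{\!\{(\mathrm{atp}_{k+1}(G,\vec vw),\mathrm{WL}^{k,t}(G,\vec v[w/1]),\dots,\mathrm{WL}^{k,t}(G,\vec v[w/k])):w\in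 V(G)\}\!\}\big)$ for $\vec v\in V(G)^k$. Oblivious $m$-WL: $\mathrm{OWL}^{m,0}=\mathrm{atp}_m$, $\mathrm{OWL}^{m,t+1}(G,\vec v)=\big(\mathrm{OWL}^{m,t}(G,\vec v),M_1,\dots,M_m\big)$ with $M_i=\{\!\{\mathrm{OWL}^{m,t}(G,\vec v[w/i]):w\in V(G)\}\!\}$ for $\vec v\in V(G)^m$. *)

theory Defs
  imports Main "HOL-Library.Multiset"
begin

text \<open>Vertex-labelled graphs: vertex set, (symmetric, irreflexive) edge relation,
  and labels P_1..P_l represented as labels 0 .. labels (l-1).\<close>
record 'a graph =
  verts :: "'a set"
  edges :: "'a \<Rightarrow> 'a \<Rightarrow> bool"
  labels :: "nat \<Rightarrow> 'a set"

definition wf_graph :: "nat \<Rightarrow> 'a graph \<Rightarrow> bool" where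
  "wf_graph l G \<longleftrightarrow> finite (verts G)
     \<and> (\<forall>u v. edges G u v \<longrightarrow> u \<in> verts G \<and> v \<in> verts G)
     \<and> (\<forall>u v. edges G u v \<longrightarrow> edges G v u)
     \<and> (\<forall>u. \<not> edges G u u)
     \<and> (\<forall>j<l. labels G j \<subseteq> verts G)"

type_synonym atype = "(bool \<times> bool) list list \<times> bool list list"

definition atp :: "nat \<Rightarrow> 'a graph \<Rightarrow> 'a list \<Rightarrow> atype" where
  "atp l G vs =
    (map (\<lambda>i. map (\<lambda>j. (vs ! i = vs ! j, edges G (vs ! i) (vs ! j))) [Suc i..<length vs])
         [0..<length vs],
     map (\<lambda>i. map (\<lambda>j. vs ! i \<in> labels G j) [0..<l]) [0..<length vs])"

text \<open>Formal colours (for k-WL), comparable across graphs.\<close>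
datatype colour =
    CAtp atype
  | CWL colour "(atype \<times> colour list) multiset"


datatype ocolour =
    OAtp atype
  | OStep ocolour "ocolour multiset list"

text \<open>k-WL where k = length of the tuple; replacement at position i (0-based).\<close>
fun WL :: "nat \<Rightarrow> 'a graph \<Rightarrow> nat \<Rightarrow> 'a list \<Rightarrow> colour" where
  "WL l G 0 vs = CAtp (atp l G vs)"
| "WL l G (Suc t) vs =
     CWL (WL l G t vs)
       (image_mset (\<lambda>w. (atp l G (vs @ [w]), map (\<lambda>i. WL l G t (vs[i := w])) [0..<length vs]))
          (mset_set (verts G)))"

fun OWL :: "nat \<Rightarrow> 'a graph \<Rightarrow> nat \<Rightarrow> 'a list \<Rightarrow> ocolour" where
  "OWL l G 0 vs = OAtp (atp l G vs)"
| "OWL l G (Suc t) vs =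
     OStep (OWL l G t vs)
       (map (\<lambda>i. image_mset (\<lambda>w. OWL l G t (vs[i := w])) (mset_set (verts G))) [0..<length vs])"

text \<open>Removal of the i-th entry (0-based): v[/i+1].\<close>
definition remove_nth :: "nat \<Rightarrow> 'a list \<Rightarrow> 'a list" where
  "remove_nth i vs = take i vs @ drop (Suc i) vs"

end

theory Submission
  imports Defs
begin

definition sk :: "nat \<Rightarrow> nat \<Rightarrow> nat" where "sk a q = (if q < a then q else Suc q)"
definition ps :: "nat \<Rightarrow> nat \<Rightarrow> nat" where "ps a p = (if p < a then p else p - 1)"

lemma len_rm: "i < length v \<Longrightarrow> length (remove_nth i v) = length v - 1"
  by (simp add: remove_nth_def)

lemma nth_rm: "i < length v \<Longrightarrow> q < length v - 1 \<Longrightarrow> remove_nth i v ! q = v ! sk i q"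
  by (auto simp add: remove_nth_def sk_def nth_append min_def)

lemma rm_upd_same: "remove_nth i (v[i:=w]) = remove_nth i v"
  by (simp add: remove_nth_def)

lemma mset_transfer:
  assumes eq: "image_mset f A = image_mset g B"
    and cross: "\<And>x y. x \<in># A \<Longrightarrow> y \<in># B \<Longrightarrow> f x = g y \<Longrightarrow> f' x = g' y"
  shows "image_mset f' A = image_mset g' B"
proof -
  define h where "h c = f' (SOME x. x \<in># A \<and> f x = c)" for c
  have 1: "image_mset f' A = image_mset (h \<circ> f) A"
  proof (rule image_mset_cong)
    fix x assume x: "x \<in># A"
    then have "\<exists>x0. x0 \<in># A \<and> f x0 = f x" by blast
    then have s: "(SOME x0. x0 \<in># A \<and> f x0 = f x) \<in># A \<and> f (SOME x0. x0 \<in># A \<and> f x0 = f x) = f x"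
      by (rule someI_ex)
    have "f x \<in># image_mset g B" using eq x by (metis image_eqI set_image_mset)
    then obtain y where y: "y \<in># B" "g y = f x" by auto
    show "f' x = (h \<circ> f) x" using cross[OF x y(1)] cross[OF s[THEN conjunct1] y(1)] s y
      by (simp add: h_def)
  qed
  have 2: "image_mset g' B = image_mset (h \<circ> g) B"
  proof (rule image_mset_cong)
    fix y assume y: "y \<in># B"
    have "g y \<in># image_mset f A" using eq y by (metis image_eqI set_image_mset)
    then obtain x where x: "x \<in># A" "f x = g y" by auto
    then have "\<exists>x0. x0 \<in># A \<and> f x0 = g y" by blast
    then have s: "(SOME x0. x0 \<in># A \<and> f x0 = g y) \<in># A \<and> f (SOME x0. x0 \<in># A \<and> f x0 = g y) = g y"
      by (rule someI_ex)
    show "g' y = (h \<circ> g) y" using cross[OF s[THEN conjunct1] y] s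
      by (simp add: h_def)
  qed
  have "image_mset (h \<circ> f) A = image_mset h (image_mset f A)" by (simp add: image_mset.compositionality)
  also have "\<dots> = image_mset h (image_mset g B)" using eq by simp
  also have "\<dots> = image_mset (h \<circ> g) B" by (simp add: image_mset.compositionality)
  finally show ?thesis unfolding 1 2 .
qed

lemma ball_upt1: "(\<forall>x\<in>{0..<n}. \<forall>y\<in>{Suc x..<n}. P x y) \<longleftrightarrow> (\<forall>i<n. \<forall>j<n. i<j \<longrightarrow> P i j)"
  by (auto simp: Suc_le_eq)

lemma ball_upt2: "(\<forall>x\<in>{0..<n::nat}. \<forall>y\<in>{0..<m::nat}. P x y) \<longleftrightarrow> (\<forall>i<n. \<forall>j<m. P i j)"
  by auto

lemma atp_eq_iff:
 "atp l G u = atp l G' u' \<longleftrightarrow> length u = length u' \<and>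
   (\<forall>i<length u. \<forall>j<length u. i < j \<longrightarrow> (u!i = u!j \<longleftrightarrow> u'!i = u'!j) \<and> (edges G (u!i) (u!j) \<longleftrightarrow> edges G' (u'!i) (u'!j))) \<and>
   (\<forall>i<length u. \<forall>j<l. (u!i \<in> labels G j \<longleftrightarrow> u'!i \<in> labels G' j))"
proof (cases "length u = length u'")
  case True
  show ?thesis unfolding atp_def using True
    by (simp only: prod.inject map_eq_conv set_upt ball_upt1 ball_upt2 prod.inject simp_thms)
next
  case False
  have "length (fst (atp l G u)) = length u" "length (fst (atp l G' u')) = length u'" by (simp_all add: atp_def)
  then have "atp l G u \<noteq> atp l G' u'" using False by metis
  then show ?thesis using False by simp
qed

lemma atp_eq_full:
  assumes "wf_graph l G" "wf_graph l G'" "atp l G u = atp l G' u'"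
  shows "length u = length u'" and
   "\<And>i j. i<length u \<Longrightarrow> j<length u \<Longrightarrow> (u!i = u!j \<longleftrightarrow> u'!i = u'!j) \<and> (edges G (u!i) (u!j) \<longleftrightarrow> edges G' (u'!i) (u'!j))"
   and "\<And>i j. i<length u \<Longrightarrow> j<l \<Longrightarrow> (u!i \<in> labels G j \<longleftrightarrow> u'!i \<in> labels G' j)"
proof -
  note A = assms(3)[unfolded atp_eq_iff]
  show "length u = length u'" using A by (rule conjunct1)
  show "\<And>i j. i<length u \<Longrightarrow> j<l \<Longrightarrow> (u!i \<in> labels G j \<longleftrightarrow> u'!i \<in> labels G' j)"
    using A[THEN conjunct2, THEN conjunct2] by blast
  fix i j assume ij: "i<length u" "j<length u"
  have irr: "\<And>x. \<not> edges G x x" "\<And>x. \<not> edges G' x x" using assms(1,2) unfolding wf_graph_def by simp_all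
  have sym: "\<And>x y. edges G x y \<Longrightarrow> edges G y x" "\<And>x y. edges G' x y \<Longrightarrow> edges G' y x"
    using assms(1,2) unfolding wf_graph_def by simp_all
  have A2: "\<forall>i<length u. \<forall>j<length u. i < j \<longrightarrow> (u!i = u!j \<longleftrightarrow> u'!i = u'!j) \<and> (edges G (u!i) (u!j) \<longleftrightarrow> edges G' (u'!i) (u'!j))"
    using A by (rule conjunct1[OF conjunct2])
  consider "i < j" | "i = j" | "j < i" by linarith
  then show "(u!i = u!j \<longleftrightarrow> u'!i = u'!j) \<and> (edges G (u!i) (u!j) \<longleftrightarrow> edges G' (u'!i) (u'!j))"
  proof cases
    case 1 show ?thesis using A2[rule_format, OF ij 1] .
  next
    case 2 then show ?thesis using irr by simp
  next
    case 3
    have h: "(u!j = u!i \<longleftrightarrow> u'!j = u'!i) \<and> (edges G (u!j) (u!i) \<longleftrightarrow> edges G' (u'!j) (u'!i))"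
      using A2[rule_format, OF ij(2,1) 3] .
    have s1: "edges G (u!j) (u!i) = edges G (u!i) (u!j)" "edges G' (u'!j) (u'!i) = edges G' (u'!i) (u'!j)"
      using sym by (metis (full_types))+
    show ?thesis using h unfolding s1 by (simp add: eq_commute)
  qed
qed

lemma atp_map:
  assumes "wf_graph l G" "wf_graph l G'" "atp l G u = atp l G' u'" "\<forall>q\<in>set s. q < length u"
  shows "atp l G (map (nth u) s) = atp l G' (map (nth u') s)"
  unfolding atp_eq_iff using atp_eq_full[OF assms(1-3)] assms(4) by simp

lemma WL_atp: "WL l G t u = WL l G' t u' \<Longrightarrow> atp l G u = atp l G' u'"
  by (induction t) auto

lemma OWL_atp: "OWL l G t u = OWL l G' t u' \<Longrightarrow> atp l G u = atp l G' u'"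
  by (induction t) auto

lemma upd_map_nth: "\<forall>q\<in>set \<pi>. q < length u \<Longrightarrow> distinct \<pi> \<Longrightarrow> i < length \<pi> \<Longrightarrow> (map (nth u) \<pi>)[i:=x] = map (nth (u[\<pi>!i := x])) \<pi>"
  by (rule nth_equalityI) (auto simp: nth_list_update nth_eq_iff_index_eq)

lemma app_map_nth: "\<forall>q\<in>set \<pi>. q < length u \<Longrightarrow> map (nth u) \<pi> @ [x] = map (nth (u@[x])) (\<pi> @ [length u])"
  by (auto simp: nth_append)

lemma WL_perm:
  assumes wf: "wf_graph l G" "wf_graph l G'"
  shows "WL l G t u = WL l G' t u' \<Longrightarrow> \<forall>q\<in>set \<pi>. q < length u \<Longrightarrow> distinct \<pi> \<Longrightarrow>
     WL l G t (map (nth u) \<pi>) = WL l G' t (map (nth u') \<pi>)"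
proof (induction t arbitrary: u u')
  case 0
  then show ?case using atp_map[OF wf] by simp
next
  case (Suc t)
  have len: "length u' = length u" using atp_eq_full(1)[OF wf WL_atp[OF Suc.prems(1)]] by simp
  from Suc.prems(1) have e0: "WL l G t u = WL l G' t u'" and
    ms: "image_mset (\<lambda>w. (atp l G (u @ [w]), map (\<lambda>i. WL l G t (u[i := w])) [0..<length u])) (mset_set (verts G))
       = image_mset (\<lambda>w. (atp l G' (u' @ [w]), map (\<lambda>i. WL l G' t (u'[i := w])) [0..<length u'])) (mset_set (verts G'))"
    by simp_all
  show ?case
  proof (simp only: WL.simps, intro arg_cong2[where f=CWL])
    show "WL l G t (map ((!) u) \<pi>) = WL l G' t (map ((!) u') \<pi>)" using Suc.IH[OF e0 Suc.prems(2,3)] .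
    show "image_mset (\<lambda>w. (atp l G (map ((!) u) \<pi> @ [w]), map (\<lambda>i. WL l G t ((map ((!) u) \<pi>)[i := w])) [0..<length (map ((!) u) \<pi>)])) (mset_set (verts G))
       = image_mset (\<lambda>w. (atp l G' (map ((!) u') \<pi> @ [w]), map (\<lambda>i. WL l G' t ((map ((!) u') \<pi>)[i := w])) [0..<length (map ((!) u') \<pi>)])) (mset_set (verts G'))"
    proof (rule mset_transfer[OF ms])
      fix x y
      assume "(atp l G (u @ [x]), map (\<lambda>i. WL l G t (u[i := x])) [0..<length u]) =
         (atp l G' (u' @ [y]), map (\<lambda>i. WL l G' t (u'[i := y])) [0..<length u'])"
      then have a: "atp l G (u @ [x]) = atp l G' (u' @ [y])"
        and w: "\<And>i. i < length u \<Longrightarrow> WL l G t (u[i := x]) = WL l G' t (u'[i := y])"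
        using len by (auto simp: map_eq_conv)
      have "atp l G (map ((!) u) \<pi> @ [x]) = atp l G' (map ((!) u') \<pi> @ [y])"
      proof -
        have e1: "map ((!) u) \<pi> @ [x] = map (nth (u@[x])) (\<pi>@[length u])" by (rule app_map_nth[OF Suc.prems(2)])
        have e2: "map ((!) u') \<pi> @ [y] = map (nth (u'@[y])) (\<pi>@[length u])" using app_map_nth[of \<pi> u' y] Suc.prems(2) len by simp
        show ?thesis unfolding e1 e2 by (rule atp_map[OF wf a]) (use Suc.prems(2) in auto)
      qed
      moreover have "map (\<lambda>i. WL l G t ((map ((!) u) \<pi>)[i := x])) [0..<length (map ((!) u) \<pi>)]
          = map (\<lambda>i. WL l G' t ((map ((!) u') \<pi>)[i := y])) [0..<length (map ((!) u') \<pi>)]"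
      proof (rule map_cong)
        fix i assume "i \<in> set [0..<length (map ((!) u') \<pi>)]"
        then have i: "i < length \<pi>" by simp
        then have pi: "\<pi>!i < length u" using Suc.prems(2) by auto
        show "WL l G t ((map ((!) u) \<pi>)[i := x]) = WL l G' t ((map ((!) u') \<pi>)[i := y])"
        proof -
          have e1: "(map (nth u) \<pi>)[i:=x] = map (nth (u[\<pi>!i:=x])) \<pi>"
            by (rule upd_map_nth) (use Suc.prems(2,3) i in auto)
          have e2: "(map (nth u') \<pi>)[i:=y] = map (nth (u'[\<pi>!i:=y])) \<pi>"
            by (rule upd_map_nth) (use Suc.prems(2,3) i len in auto)
          show ?thesis unfolding e1 e2
            by (rule Suc.IH[OF w[OF pi]]) (use Suc.prems(2,3) in auto)
        qed
      qed simp
      ultimately show "(atp l G (map ((!) u) \<pi> @ [x]), map (\<lambda>i. WL l G t ((map ((!) u) \<pi>)[i := x])) [0..<length (map ((!) u) \<pi>)]) =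
         (atp l G' (map ((!) u') \<pi> @ [y]), map (\<lambda>i. WL l G' t ((map ((!) u') \<pi>)[i := y])) [0..<length (map ((!) u') \<pi>)])"
        by simp
    qed
  qed
qed


lemma L1: "i < length v \<Longrightarrow> remove_nth i v = map (nth v) (map (sk i) [0..<length v - 1])"
  by (rule nth_equalityI) (auto simp: len_rm nth_rm)

lemma L2: "i < length v \<Longrightarrow> v[i:=w] = map (nth (remove_nth i v @ [w])) (map (\<lambda>q. if q = i then length v - 1 else ps i q) [0..<length v])"
  by (rule nth_equalityI) (auto simp: len_rm nth_rm nth_append ps_def sk_def nth_list_update)

lemma L3: "i < length v \<Longrightarrow> remove_nth i v @ [w] = map (nth (v[i:=w])) (map (sk i) [0..<length v - 1] @ [i])"
  by (rule nth_equalityI) (auto simp: len_rm nth_rm nth_append sk_def nth_list_update)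

lemma L4: "a < length v \<Longrightarrow> b < length v \<Longrightarrow> a \<noteq> b \<Longrightarrow>
  (remove_nth a v)[ps a b := w] = map (nth (remove_nth b (v[a:=w])))
     (map (\<lambda>q. if q = ps a b then ps b a else ps b (sk a q)) [0..<length v - 1])"
  by (rule nth_equalityI) (auto simp: len_rm nth_rm nth_append ps_def sk_def nth_list_update)

lemma L4d: "a < n \<Longrightarrow> b < n \<Longrightarrow> a \<noteq> b \<Longrightarrow>
  distinct (map (\<lambda>q. if q = ps a b then ps b a else ps b (sk a q)) [0..<n - 1])
  \<and> (\<forall>q \<in> set (map (\<lambda>q. if q = ps a b then ps b a else ps b (sk a q)) [0..<n - 1]). q < n - 1)"
  by (auto simp: distinct_map inj_on_def ps_def sk_def)

lemma L5: "a < length v \<Longrightarrow> b < length v \<Longrightarrow> a \<noteq> b \<Longrightarrow>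
  remove_nth b (v[a:=w]) = map (nth ((remove_nth a v)[ps a b := w]))
     (map (\<lambda>q. if sk b q = a then ps a b else ps a (sk b q)) [0..<length v - 1])"
  by (rule nth_equalityI) (auto simp: len_rm nth_rm nth_append ps_def sk_def nth_list_update)

lemma L5d: "a < n \<Longrightarrow> b < n \<Longrightarrow> a \<noteq> b \<Longrightarrow>
  distinct (map (\<lambda>q. if sk b q = a then ps a b else ps a (sk b q)) [0..<n - 1])
  \<and> (\<forall>q \<in> set (map (\<lambda>q. if sk b q = a then ps a b else ps a (sk b q)) [0..<n - 1]). q < n - 1)"
  by (auto simp: distinct_map inj_on_def ps_def sk_def)


lemma main:
  assumes wf: "wf_graph l G" "wf_graph l G'"
  shows "length v = n \<Longrightarrow> length v' = n \<Longrightarrow>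
    OWL l G t v = OWL l G' t v' \<longleftrightarrow>
      (atp l G v = atp l G' v' \<and> (\<forall>i<n. WL l G t (remove_nth i v) = WL l G' t (remove_nth i v')))"
proof (induction t arbitrary: v v')
  case 0
  have "atp l G (remove_nth i v) = atp l G' (remove_nth i v')" if a: "atp l G v = atp l G' v'" and i: "i < n" for i
  proof -
    have "atp l G (map (nth v) (map (sk i) [0..<length v - 1])) = atp l G' (map (nth v') (map (sk i) [0..<length v - 1]))"
      by (rule atp_map[OF wf a]) (use i 0 in \<open>auto simp: sk_def\<close>)
    then show ?thesis using L1[of i v] L1[of i v'] i 0 by simp
  qed
  then show ?case by auto
next
  case (Suc t)
  show ?case
  proof
    assume H: "OWL l G (Suc t) v = OWL l G' (Suc t) v'"
    then have o0: "OWL l G t v = OWL l G' t v'" by simp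
    with Suc.IH[OF Suc.prems] have a: "atp l G v = atp l G' v'"
      and w0: "\<And>i. i<n \<Longrightarrow> WL l G t (remove_nth i v) = WL l G' t (remove_nth i v')" by auto
    have ms: "image_mset (\<lambda>w. OWL l G t (v[i:=w])) (mset_set (verts G)) = image_mset (\<lambda>w. OWL l G' t (v'[i:=w])) (mset_set (verts G'))"
      if "i < n" for i
      using H that Suc.prems by (auto simp: map_eq_conv)
    have "WL l G (Suc t) (remove_nth i v) = WL l G' (Suc t) (remove_nth i v')" if i: "i < n" for i
    proof (simp only: WL.simps, intro arg_cong2[where f=CWL])
      show "WL l G t (remove_nth i v) = WL l G' t (remove_nth i v')" using w0 i .
      show "image_mset (\<lambda>w. (atp l G (remove_nth i v @ [w]), map (\<lambda>j. WL l G t ((remove_nth i v)[j := w])) [0..<length (remove_nth i v)])) (mset_set (verts G))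
       = image_mset (\<lambda>w. (atp l G' (remove_nth i v' @ [w]), map (\<lambda>j. WL l G' t ((remove_nth i v')[j := w])) [0..<length (remove_nth i v')])) (mset_set (verts G'))"
      proof (rule mset_transfer[OF ms[OF i]])
        fix x y assume "OWL l G t (v[i := x]) = OWL l G' t (v'[i := y])"
        then have ax: "atp l G (v[i := x]) = atp l G' (v'[i := y])"
          and wx: "\<And>b. b<n \<Longrightarrow> WL l G t (remove_nth b (v[i := x])) = WL l G' t (remove_nth b (v'[i := y]))"
          using Suc.IH[of "v[i := x]" "v'[i := y]"] Suc.prems by auto
        have "atp l G (remove_nth i v @ [x]) = atp l G' (remove_nth i v' @ [y])"
        proof -
          have "atp l G (map (nth (v[i:=x])) (map (sk i) [0..<n - 1] @ [i])) = atp l G' (map (nth (v'[i:=y])) (map (sk i) [0..<n - 1] @ [i]))"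
            by (rule atp_map[OF wf ax]) (use i Suc.prems in \<open>auto simp: sk_def\<close>)
          then show ?thesis using L3[of i v x] L3[of i v' y] i Suc.prems by simp
        qed
        moreover have "map (\<lambda>j. WL l G t ((remove_nth i v)[j := x])) [0..<length (remove_nth i v)]
           = map (\<lambda>j. WL l G' t ((remove_nth i v')[j := y])) [0..<length (remove_nth i v')]"
        proof (rule map_cong)
          show "[0..<length (remove_nth i v)] = [0..<length (remove_nth i v')]" using i Suc.prems by (simp add: len_rm)
          fix j assume "j \<in> set [0..<length (remove_nth i v')]"
          then have j: "j < n - 1" using i Suc.prems by (simp add: len_rm)
          define b where "b = sk i j"
          have b: "b < n" "b \<noteq> i" "ps i b = j" using j i by (auto simp: b_def sk_def ps_def)
          define \<pi> where "\<pi> = map (\<lambda>q. if q = ps i b then ps b i else ps b (sk i q)) [0..<n - 1]"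
          have DB: "distinct \<pi> \<and> (\<forall>q\<in>set \<pi>. q < n - 1)"
            unfolding \<pi>_def by (rule L4d[OF i b(1) b(2)[symmetric]])
          have lr: "length (remove_nth b (v[i:=x])) = n - 1" using b Suc.prems by (simp add: len_rm)
          have "WL l G t (map (nth (remove_nth b (v[i:=x]))) \<pi>) = WL l G' t (map (nth (remove_nth b (v'[i:=y]))) \<pi>)"
            by (rule WL_perm[OF wf wx[OF b(1)]]) (simp only: lr, rule DB[THEN conjunct2], rule DB[THEN conjunct1])
          moreover have "(remove_nth i v)[j := x] = map (nth (remove_nth b (v[i:=x]))) \<pi>"
          proof -
            have "(remove_nth i v)[ps i b := x] = map (nth (remove_nth b (v[i:=x]))) (map (\<lambda>q. if q = ps i b then ps b i else ps b (sk i q)) [0..<length v - 1])"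
              by (rule L4) (use b i Suc.prems in auto)
            then show ?thesis unfolding \<pi>_def b(3) Suc.prems(1) .
          qed
          moreover have "(remove_nth i v')[j := y] = map (nth (remove_nth b (v'[i:=y]))) \<pi>"
          proof -
            have "(remove_nth i v')[ps i b := y] = map (nth (remove_nth b (v'[i:=y]))) (map (\<lambda>q. if q = ps i b then ps b i else ps b (sk i q)) [0..<length v' - 1])"
              by (rule L4) (use b i Suc.prems in auto)
            then show ?thesis unfolding \<pi>_def b(3) Suc.prems(2) .
          qed
          ultimately show "WL l G t ((remove_nth i v)[j := x]) = WL l G' t ((remove_nth i v')[j := y])"
            by simp
        qed
        ultimately show "(atp l G (remove_nth i v @ [x]), map (\<lambda>j. WL l G t ((remove_nth i v)[j := x])) [0..<length (remove_nth i v)]) =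
         (atp l G' (remove_nth i v' @ [y]), map (\<lambda>j. WL l G' t ((remove_nth i v')[j := y])) [0..<length (remove_nth i v')])"
          by simp
      qed
    qed
    then show "atp l G v = atp l G' v' \<and> (\<forall>i<n. WL l G (Suc t) (remove_nth i v) = WL l G' (Suc t) (remove_nth i v'))"
      using a by blast
  next
    assume H: "atp l G v = atp l G' v' \<and> (\<forall>i<n. WL l G (Suc t) (remove_nth i v) = WL l G' (Suc t) (remove_nth i v'))"
    then have a: "atp l G v = atp l G' v'"
      and w1: "\<And>i. i<n \<Longrightarrow> WL l G (Suc t) (remove_nth i v) = WL l G' (Suc t) (remove_nth i v')" by auto
    have w0: "\<And>i. i<n \<Longrightarrow> WL l G t (remove_nth i v) = WL l G' t (remove_nth i v')" using w1 by simp
    have o0: "OWL l G t v = OWL l G' t v'" using Suc.IH[OF Suc.prems] a w0 by blast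
    have "image_mset (\<lambda>w. OWL l G t (v[i:=w])) (mset_set (verts G)) = image_mset (\<lambda>w. OWL l G' t (v'[i:=w])) (mset_set (verts G'))"
      if i: "i < n" for i
    proof -
      have ms: "image_mset (\<lambda>w. (atp l G (remove_nth i v @ [w]), map (\<lambda>j. WL l G t ((remove_nth i v)[j := w])) [0..<length (remove_nth i v)])) (mset_set (verts G))
       = image_mset (\<lambda>w. (atp l G' (remove_nth i v' @ [w]), map (\<lambda>j. WL l G' t ((remove_nth i v')[j := w])) [0..<length (remove_nth i v')])) (mset_set (verts G'))"
        using w1[OF i] by simp
      show ?thesis
      proof (rule mset_transfer[OF ms])
        fix x y assume "(atp l G (remove_nth i v @ [x]), map (\<lambda>j. WL l G t ((remove_nth i v)[j := x])) [0..<length (remove_nth i v)]) =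
         (atp l G' (remove_nth i v' @ [y]), map (\<lambda>j. WL l G' t ((remove_nth i v')[j := y])) [0..<length (remove_nth i v')])"
        then have ax: "atp l G (remove_nth i v @ [x]) = atp l G' (remove_nth i v' @ [y])"
          and wx: "\<And>j. j < n - 1 \<Longrightarrow> WL l G t ((remove_nth i v)[j := x]) = WL l G' t ((remove_nth i v')[j := y])"
          using i Suc.prems by (auto simp: map_eq_conv len_rm)
        have "atp l G (v[i:=x]) = atp l G' (v'[i:=y])"
        proof -
          have "atp l G (map (nth (remove_nth i v @ [x])) (map (\<lambda>q. if q = i then n - 1 else ps i q) [0..<n]))
             = atp l G' (map (nth (remove_nth i v' @ [y])) (map (\<lambda>q. if q = i then n - 1 else ps i q) [0..<n]))"
            by (rule atp_map[OF wf ax]) (use i Suc.prems in \<open>auto simp: ps_def len_rm\<close>)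
          then show ?thesis using L2[of i v x, unfolded Suc.prems(1)] L2[of i v' y, unfolded Suc.prems(2)] i by simp
        qed
        moreover have "WL l G t (remove_nth b (v[i:=x])) = WL l G' t (remove_nth b (v'[i:=y]))" if b: "b < n" for b
        proof (cases "b = i")
          case True
          then show ?thesis using w0[OF i] by (simp add: rm_upd_same)
        next
          case False
          have j: "ps i b < n - 1" using b i False by (auto simp: ps_def)
          define \<pi> where "\<pi> = map (\<lambda>q. if sk b q = i then ps i b else ps i (sk b q)) [0..<n - 1]"
          have DB: "distinct \<pi> \<and> (\<forall>q\<in>set \<pi>. q < n - 1)"
            unfolding \<pi>_def by (rule L5d[OF i b False[symmetric]])
          have lr: "length ((remove_nth i v)[ps i b := x]) = n - 1" using i Suc.prems by (simp add: len_rm)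
          have "WL l G t (map (nth ((remove_nth i v)[ps i b := x])) \<pi>) = WL l G' t (map (nth ((remove_nth i v')[ps i b := y])) \<pi>)"
            by (rule WL_perm[OF wf wx[OF j]]) (simp only: lr, rule DB[THEN conjunct2], rule DB[THEN conjunct1])
          moreover have "remove_nth b (v[i:=x]) = map (nth ((remove_nth i v)[ps i b := x])) \<pi>"
          proof -
            have "remove_nth b (v[i:=x]) = map (nth ((remove_nth i v)[ps i b := x])) (map (\<lambda>q. if sk b q = i then ps i b else ps i (sk b q)) [0..<length v - 1])"
              by (rule L5) (use b i False Suc.prems in auto)
            then show ?thesis unfolding \<pi>_def Suc.prems(1) .
          qed
          moreover have "remove_nth b (v'[i:=y]) = map (nth ((remove_nth i v')[ps i b := y])) \<pi>"
          proof -
            have "remove_nth b (v'[i:=y]) = map (nth ((remove_nth i v')[ps i b := y])) (map (\<lambda>q. if sk b q = i then ps i b else ps i (sk b q)) [0..<length v' - 1])"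
              by (rule L5) (use b i False Suc.prems in auto)
            then show ?thesis unfolding \<pi>_def Suc.prems(2) .
          qed
          ultimately show ?thesis by simp
        qed
        ultimately show "OWL l G t (v[i := x]) = OWL l G' t (v'[i := y])"
          using Suc.IH[of "v[i := x]" "v'[i := y]"] Suc.prems by auto
      qed
    qed
    then show "OWL l G (Suc t) v = OWL l G' (Suc t) v'"
      using o0 Suc.prems by (auto simp: map_eq_conv)
  qed
qed


theorem lemmaA1:
  fixes G :: "'a graph" and G' :: "'b graph" and l k t :: nat
    and vs :: "'a list" and vs' :: "'b list"
  assumes "k \<ge> 1"
    and "wf_graph l G" and "wf_graph l G'"
    and "length vs = k + 1" and "set vs \<subseteq> verts G"
    and "length vs' = k + 1" and "set vs' \<subseteq> verts G'"
  shows "OWL l G t vs = OWL l G' t vs' \<longleftrightarrow>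
           (atp l G vs = atp l G' vs' \<and>
            (\<forall>i < k + 1. WL l G t (remove_nth i vs) = WL l G' t (remove_nth i vs')))"
  by (rule main[OF assms(2,3,4,6)])

end
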